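(* Let $N$ be a proper metric space which admits dilations and let $N'$ be a uniformly discrete metric space which is quasi-isometric to $N$. If, for all $R>0$, there is a radially sublinear cover of $N'$ with $R$-multiplicity at most $k$, then $k\geq\dim_{\mathrm{top}}(N)+1$.
   Context: $N$ admits dilations if for some $\lambda\neq1$ there is a bijection $\psi:N\to N$ with $d(\psi(x),\psi(x'))=\lambda d(x,x')$ for all $x,x'$. Uniformly discrete: $d(x,y)\geq1$ for $x\neq y$. A cover $\mathcal U$ of $N'$ is radially sublinear if there is $a\in N'$ with $\lim_{m\to\infty}\frac1m\max\{\diam(U):U\in\mathcal U,\ d(a,U)\leq m\}=0$. A cover has $R$-multiplicity at most $k$ if every closed ball of radius $R$ meets at most $k$ elements of the cover. $\dim_{\mathrm{top}}$ is the topological covering dimension. *)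

theory Defs
  imports "HOL-Analysis.Analysis"
begin

definition proper_metric :: "'a::metric_space itself \<Rightarrow> bool" where
  "proper_metric _ \<longleftrightarrow> (\<forall>(x::'a) r. compact (cball x r))"

definition admits_dilations :: "'a::metric_space itself \<Rightarrow> bool" where
  "admits_dilations _ \<longleftrightarrow> (\<exists>lam::real. lam \<noteq> 1 \<and> (\<exists>\<psi>::'a \<Rightarrow> 'a. bij \<psi> \<and>
      (\<forall>x x'. dist (\<psi> x) (\<psi> x') = lam * dist x x')))"

definition uniformly_discrete :: "'a::metric_space itself \<Rightarrow> bool" where
  "uniformly_discrete _ \<longleftrightarrow> (\<forall>x y::'a. x \<noteq> y \<longrightarrow> dist x y \<ge> 1)"

definition quasi_isometric :: "'a::metric_space itself \<Rightarrow> 'b::metric_space itself \<Rightarrow> bool" where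
  "quasi_isometric _ _ \<longleftrightarrow> (\<exists>(f::'a \<Rightarrow> 'b) (L::real) (C::real). L \<ge> 1 \<and> C \<ge> 0 \<and>
      (\<forall>x y. dist x y / L - C \<le> dist (f x) (f y) \<and> dist (f x) (f y) \<le> L * dist x y + C) \<and>
      (\<forall>z. \<exists>x. dist z (f x) \<le> C))"

text \<open>Radially sublinear cover: the maximal diameter of members within distance m of a
  base point a is o(m).  Unbounded members count as having infinite diameter.\<close>
definition radially_sublinear :: "'b::metric_space set set \<Rightarrow> bool" where
  "radially_sublinear \<U> \<longleftrightarrow> (\<exists>a. \<forall>\<epsilon>>0. \<exists>M. \<forall>m\<ge>M. \<forall>U\<in>\<U>.
      infdist a U \<le> m \<longrightarrow> bounded U \<and> diameter U \<le> \<epsilon> * m)"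

definition R_multiplicity_le :: "real \<Rightarrow> 'b::metric_space set set \<Rightarrow> nat \<Rightarrow> bool" where
  "R_multiplicity_le R \<U> k \<longleftrightarrow> (\<forall>x. finite {U\<in>\<U>. U \<inter> cball x R \<noteq> {}} \<and>
      card {U\<in>\<U>. U \<inter> cball x R \<noteq> {}} \<le> k)"

definition covering_dim_le :: "'a topology \<Rightarrow> int \<Rightarrow> bool" where
  "covering_dim_le X n \<longleftrightarrow> (\<forall>\<U>. finite \<U> \<and> (\<forall>U\<in>\<U>. openin X U) \<and> \<Union>\<U> = topspace X \<longrightarrow>
      (\<exists>\<V>. finite \<V> \<and> (\<forall>V\<in>\<V>. openin X V) \<and> \<Union>\<V> = topspace X \<and>
         (\<forall>V\<in>\<V>. \<exists>U\<in>\<U>. V \<subseteq> U) \<and>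
         (\<forall>x\<in>topspace X. int (card {V\<in>\<V>. x \<in> V}) \<le> n + 1)))"

definition dim_top :: "'a topology \<Rightarrow> ereal" where
  "dim_top X = Inf {ereal (of_int n) | n. covering_dim_le X n}"

end

theory Submission
  imports Defs
begin

definition cov_supply :: "'a::metric_space \<Rightarrow> nat \<Rightarrow> bool" where
 "cov_supply a0 k \<longleftrightarrow> (\<forall>\<rho> e. \<rho> \<ge> 0 \<longrightarrow> e > 0 \<longrightarrow> (\<exists>r>0. \<exists>\<V>::'a set set. \<Union>\<V> = UNIV \<and>
    (\<forall>x. finite {V\<in>\<V>. V \<inter> cball x r \<noteq> {}} \<and> card {V\<in>\<V>. V \<inter> cball x r \<noteq> {}} \<le> k) \<and>
    (\<forall>V\<in>\<V>. V \<inter> cball a0 \<rho> \<noteq> {} \<longrightarrow> bounded V \<and> diameter V \<le> e)))"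

lemma step_lemma:
  fixes W :: "'i \<Rightarrow> 'a::metric_space set" and a0 :: 'a
  assumes proper: "\<And>x r. compact (cball (x::'a) r)"
    and sup: "cov_supply a0 k" and fin: "finite I" and opn: "\<forall>i\<in>I. open (W i)"
    and cov0: "(\<Union>i\<in>I. W i) = UNIV" and rho: "\<rho> \<ge> 0"
  shows "\<exists>V. (\<forall>i\<in>I. open (V i) \<and> V i \<subseteq> W i) \<and> (\<Union>i\<in>I. V i) = UNIV \<and>
            (\<forall>x\<in>cball a0 \<rho>. card {i\<in>I. x \<in> closure (V i)} \<le> k)"
proof -
  let ?K = "cball a0 (\<rho>+1)"
  have cK: "compact ?K" using proper .
  have "?K \<subseteq> \<Union>(W`I)" using cov0 by auto
  moreover have "\<And>G. G \<in> W`I \<Longrightarrow> open G" using opn by auto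
  ultimately obtain e where e: "0<e" "\<And>x. x\<in>?K \<Longrightarrow> \<exists>G\<in>W`I. ball x e \<subseteq> G"
    using Heine_Borel_lemma[OF cK] by blast
  obtain r \<V> where r: "r>0" and cov: "\<Union>\<V> = UNIV"
    and mult: "\<And>x. finite {V\<in>\<V>. V \<inter> cball x r \<noteq> {}} \<and> card {V\<in>\<V>. V \<inter> cball x r \<noteq> {}} \<le> k"
    and small: "\<And>V. V\<in>\<V> \<Longrightarrow> V \<inter> ?K \<noteq> {} \<Longrightarrow> bounded V \<and> diameter V \<le> e/2"
    using sup[unfolded cov_supply_def, rule_format, of "\<rho>+1" "e/2"] rho e(1) by auto
  define s where "s = min (r/2) (e/4)"
  have s: "s > 0" "s \<le> r/2" "s \<le> e/4" using r e(1) by (auto simp: s_def)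
  define N where "N V = (\<Union>v\<in>V. ball v s)" for V :: "'a set"
  have exch: "\<exists>i. i\<in>I \<and> N V \<subseteq> W i" if V: "V\<in>\<V>" "V \<inter> ?K \<noteq> {}" for V
  proof -
    obtain y where y: "y\<in>V" "y\<in>?K" using V by auto
    obtain i where i: "i\<in>I" "ball y e \<subseteq> W i" using e(2)[OF y(2)] by auto
    have "N V \<subseteq> ball y e"
    proof
      fix z assume "z \<in> N V"
      then obtain v where v: "v\<in>V" "dist v z < s" by (auto simp: N_def)
      have "dist y v \<le> diameter V" using diameter_bounded_bound small[OF V] y v by auto
      then have "dist y v \<le> e/2" using small[OF V] by linarith
      then show "z \<in> ball y e" using dist_triangle[of y z v] s v by auto
    qed
    then show ?thesis using i by blast
  qed
  define ch where "ch V = (SOME i. i\<in>I \<and> N V \<subseteq> W i)" for V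
  have ch: "ch V \<in> I \<and> N V \<subseteq> W (ch V)" if "V\<in>\<V>" "V \<inter> ?K \<noteq> {}" for V
    using someI_ex[OF exch[OF that]] unfolding ch_def .
  define A where "A i = \<Union>{N V | V. V\<in>\<V> \<and> V \<inter> ?K \<noteq> {} \<and> ch V = i}" for i
  define V' where "V' i = A i \<union> (W i - ?K)" for i
  show ?thesis
  proof (intro exI[of _ V'] conjI ballI)
    fix i assume i: "i \<in> I"
    have "open (A i)" unfolding A_def N_def by (intro open_Union) auto
    then show "open (V' i)" unfolding V'_def using opn i by auto
    have "A i \<subseteq> W i"
    proof
      fix z assume "z \<in> A i"
      then obtain V where "V\<in>\<V>" "V \<inter> ?K \<noteq> {}" "ch V = i" "z \<in> N V"
        unfolding A_def by blast
      then show "z \<in> W i" using ch[of V] by blast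
    qed
    then show "V' i \<subseteq> W i" unfolding V'_def by blast
  next
    show "(\<Union>i\<in>I. V' i) = UNIV"
    proof (intro set_eqI iffI)
      fix x :: 'a
      show "x \<in> (\<Union>i\<in>I. V' i)"
      proof (cases "x \<in> ?K")
        case True
        have "x \<in> \<Union>\<V>" using cov by simp
        then obtain V where V: "V\<in>\<V>" "x\<in>V" by blast
        then have VK: "V \<inter> ?K \<noteq> {}" using True by auto
        have "x \<in> N V" using V s unfolding N_def by (auto intro!: bexI[of _ x])
        then have "x \<in> A (ch V)" unfolding A_def using V VK by auto
        then show ?thesis using ch[OF V(1) VK] unfolding V'_def by auto
      next
        case False
        have "x \<in> (\<Union>i\<in>I. W i)" using cov0 by simp
        then obtain i where "i\<in>I" "x \<in> W i" by blast
        then show ?thesis using False unfolding V'_def by auto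
      qed
    qed auto
  next
    fix x assume x: "x \<in> cball a0 \<rho>"
    let ?S = "{V\<in>\<V>. V \<inter> cball x r \<noteq> {}}"
    have sub: "{i\<in>I. x \<in> closure (V' i)} \<subseteq> ch ` ?S"
    proof clarify
      fix i assume i: "i\<in>I" "x \<in> closure (V' i)"
      have "min 1 (r/2) > 0" using r by auto
      then obtain y where y: "y\<in>V' i" "dist y x < min 1 (r/2)"
        using i(2) unfolding closure_approachable by blast
      have "dist a0 y < \<rho>+1" using x y(2) dist_triangle[of a0 y x] by (auto simp: dist_commute)
      then have "y \<in> A i" using y(1) unfolding V'_def by auto
      then obtain V where V: "V\<in>\<V>" "V \<inter> ?K \<noteq> {}" "ch V = i" "y \<in> N V"
        unfolding A_def by auto
      then obtain v where v: "v\<in>V" "dist v y < s" unfolding N_def by auto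
      have "dist x v \<le> r" using dist_triangle[of x v y] y(2) v(2) s by (auto simp: dist_commute)
      then have "V \<in> ?S" using V(1) v(1) by auto
      then show "i \<in> ch ` ?S" using V(3) by blast
    qed
    have "card {i\<in>I. x \<in> closure (V' i)} \<le> card (ch ` ?S)"
      using sub mult[of x] by (intro card_mono) auto
    also have "\<dots> \<le> card ?S" using mult[of x] by (intro card_image_le) auto
    also have "\<dots> \<le> k" using mult[of x] by auto
    finally show "card {i\<in>I. x \<in> closure (V' i)} \<le> k" .
  qed
qed


lemma dim_lemma:
  fixes a0 :: "'a::metric_space"
  assumes proper: "\<And>x r. compact (cball (x::'a) r)" and sup: "cov_supply a0 k"
  shows "covering_dim_le (euclidean::'a topology) (int k - 1)"
  unfolding covering_dim_le_def
proof (intro allI impI)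
  fix \<U> :: "'a set set"
  assume H: "finite \<U> \<and> (\<forall>U\<in>\<U>. openin euclidean U) \<and> \<Union>\<U> = topspace euclidean"
  then have fin: "finite \<U>" and opn: "\<forall>U\<in>\<U>. open U" and cov: "(\<Union>U\<in>\<U>. U) = UNIV" by auto
  define P where "P W n V \<longleftrightarrow> (\<forall>i\<in>\<U>. open (V i) \<and> V i \<subseteq> W i) \<and> (\<Union>i\<in>\<U>. V i) = UNIV \<and>
      (\<forall>x\<in>cball a0 (real n). card {i\<in>\<U>. x \<in> closure (V i)} \<le> k)" for W n and V :: "'a set \<Rightarrow> 'a set"
  define Inv where "Inv V \<longleftrightarrow> (\<forall>i\<in>\<U>. open (V i)) \<and> (\<Union>i\<in>\<U>. V i) = UNIV" for V :: "'a set \<Rightarrow> 'a set"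
  have ex: "\<exists>V. P W n V" if "Inv W" for W n
    using step_lemma[OF proper sup fin, of W "real n"] that unfolding P_def Inv_def by auto
  define seq where "seq = rec_nat (\<lambda>U. U) (\<lambda>n W. SOME V. P W n V)"
  have seq0: "seq 0 = (\<lambda>U. U)" and seqS: "\<And>n. seq (Suc n) = (SOME V. P (seq n) n V)"
    by (simp_all add: seq_def)
  have inv: "Inv (seq n)" for n
  proof (induction n)
    case 0
    then show ?case using opn cov unfolding Inv_def seq0 by auto
  next
    case (Suc n)
    have "P (seq n) n (seq (Suc n))" unfolding seqS using someI_ex[OF ex[OF Suc]] .
    then show ?case unfolding P_def Inv_def by auto
  qed
  have Pn: "P (seq n) n (seq (Suc n))" for n
    unfolding seqS using someI_ex[OF ex[OF inv]] .
  define E where "E i = (\<Inter>n. closure (seq n i))" for i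
  have closedE: "closed (E i)" for i unfolding E_def by auto
  have ordE: "card {i\<in>\<U>. x \<in> E i} \<le> k" for x
  proof -
    define n where "n = nat \<lceil>dist a0 x\<rceil>"
    have "x \<in> cball a0 (real n)" unfolding n_def by simp
    then have "card {i\<in>\<U>. x \<in> closure (seq (Suc n) i)} \<le> k" using Pn[of n] unfolding P_def by auto
    moreover have "{i\<in>\<U>. x \<in> E i} \<subseteq> {i\<in>\<U>. x \<in> closure (seq (Suc n) i)}" unfolding E_def by auto
    moreover have "finite {i\<in>\<U>. x \<in> closure (seq (Suc n) i)}" using fin by simp
    ultimately show ?thesis using card_mono le_trans by blast
  qed
  have mono: "seq (Suc n) i \<subseteq> seq n i" if "i \<in> \<U>" for n i
    using Pn[of n] that unfolding P_def by auto
  have coverE: "\<exists>i\<in>\<U>. x \<in> i \<and> x \<in> E i" for x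
  proof -
    define A where "A n = {i\<in>\<U>. x \<in> seq n i}" for n
    have Ane: "A n \<noteq> {}" for n using inv[of n] unfolding Inv_def A_def by auto
    have Afin: "finite (A n)" for n using fin unfolding A_def by auto
    have Adec: "A (Suc n) \<subseteq> A n" for n using mono unfolding A_def by auto
    obtain N where N: "\<forall>m. card (A N) \<le> card (A m)"
      using ex_has_least_nat[of "\<lambda>n. True" 0 "\<lambda>n. card (A n)"] by auto
    obtain i where i: "i \<in> A N" using Ane by blast
    have "i \<in> A m" for m
    proof (cases "m \<le> N")
      case True
      then show ?thesis using lift_Suc_antimono_le[of A, OF Adec True] i by auto
    next
      case False
      then have "A m \<subseteq> A N" using lift_Suc_antimono_le[of A, OF Adec, of N m] by auto
      then have "A m = A N" using N card_subset_eq[OF Afin] by (metis le_antisym card_mono[OF Afin])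
      then show ?thesis using i by simp
    qed
    then have "\<forall>m. i \<in> \<U> \<and> x \<in> seq m i" unfolding A_def by auto
    moreover have "x \<in> closure (seq m i)" if "x \<in> seq m i" for m using that closure_subset by blast
    ultimately show ?thesis unfolding E_def using seq0 by (metis INT_I)
  qed
  define d where "d i x = (if E i = {} then 1 else infdist x (E i))" for i x
  have d_nonneg: "d i x \<ge> 0" for i x unfolding d_def using infdist_nonneg by auto
  have d_zero: "d i x = 0 \<longleftrightarrow> x \<in> E i" for i x
    unfolding d_def using in_closed_iff_infdist_zero[OF closedE] by auto
  have d_cont: "continuous_on UNIV (d i)" for i
    unfolding d_def by (cases "E i = {}") (auto intro!: continuous_intros)
  define \<S> where "\<S> = {S. S \<subseteq> \<U> \<and> card S = Suc k}"
  have Sfin: "finite \<S>" unfolding \<S>_def using fin by auto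
  define g where "g S x = (\<Sum>i\<in>S. d i x)" for S x
  have g_pos: "g S x > 0" if "S \<in> \<S>" for S x
  proof (rule ccontr)
    assume "\<not> g S x > 0"
    moreover have "g S x \<ge> 0" unfolding g_def using d_nonneg by (simp add: sum_nonneg)
    ultimately have "g S x = 0" by simp
    moreover have finS: "finite S" using that fin unfolding \<S>_def by (auto intro: finite_subset)
    ultimately have "\<forall>i\<in>S. d i x = 0" unfolding g_def using sum_nonneg_eq_0_iff[OF finS] d_nonneg by metis
    then have "S \<subseteq> {i\<in>\<U>. x \<in> E i}" using that d_zero unfolding \<S>_def by auto
    then have "card S \<le> card {i\<in>\<U>. x \<in> E i}" using fin by (intro card_mono) auto
    then show False using ordE[of x] that unfolding \<S>_def by auto
  qed
  define \<eta> where "\<eta> x = 1 / (1 + (\<Sum>S\<in>\<S>. 1 / g S x))" for x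
  have sum_nn: "(\<Sum>S\<in>\<S>. 1 / g S x) \<ge> 0" for x using g_pos by (intro sum_nonneg) (simp add: less_imp_le)
  have eta_pos: "\<eta> x > 0" for x unfolding \<eta>_def using sum_nn[of x] by auto
  have eta_le: "\<eta> x \<le> g S x" if "S \<in> \<S>" for S x
  proof -
    have "1 / g S x \<le> (\<Sum>S\<in>\<S>. 1 / g S x)"
      using that Sfin g_pos by (intro member_le_sum) (auto simp: less_imp_le)
    then have "1 / g S x \<le> 1 + (\<Sum>S\<in>\<S>. 1 / g S x)" by linarith
    then have "1 / (1 + (\<Sum>S\<in>\<S>. 1 / g S x)) \<le> 1 / (1 / g S x)"
      using g_pos[OF that, of x] sum_nn[of x] by (intro divide_left_mono) (auto intro!: divide_pos_pos add_pos_nonneg)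
    then show ?thesis unfolding \<eta>_def using g_pos[OF that, of x] by simp
  qed
  have g_cont: "continuous_on UNIV (g S)" for S
    unfolding g_def using d_cont by (intro continuous_intros) auto
  have eta_cont: "continuous_on UNIV \<eta>"
  proof -
    have "continuous_on UNIV (\<lambda>x. 1 / g S x)" if "S \<in> \<S>" for S
      using g_cont g_pos[OF that] by (intro continuous_intros) (auto simp: less_imp_neq[symmetric])
    then have "continuous_on UNIV (\<lambda>x. \<Sum>S\<in>\<S>. 1 / g S x)" by (intro continuous_on_sum) auto
    then have C: "continuous_on UNIV (\<lambda>x. 1 + (\<Sum>S\<in>\<S>. 1 / g S x))"
      by (intro continuous_on_add continuous_on_const)
    have "\<forall>x\<in>UNIV. 1 + (\<Sum>S\<in>\<S>. 1 / g S x) \<noteq> 0" using sum_nn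
      by (metis add_pos_nonneg less_numeral_extra(1) less_numeral_extra(3))
    then show ?thesis unfolding \<eta>_def
      by (rule continuous_on_divide[OF continuous_on_const C])

  qed
  define G where "G i = i \<inter> {x. real (Suc k) * d i x < \<eta> x}" for i
  have G_open: "open (G i)" if "i \<in> \<U>" for i
    unfolding G_def using opn that d_cont eta_cont
    by (intro open_Int open_Collect_less) (auto intro: continuous_intros)
  have G_cov: "(\<Union>i\<in>\<U>. G i) = UNIV"
  proof -
    have "x \<in> (\<Union>i\<in>\<U>. G i)" for x
    proof -
      obtain i where "i\<in>\<U>" "x \<in> i" "x \<in> E i" using coverE by blast
      moreover have "d i x = 0" using d_zero \<open>x \<in> E i\<close> by blast
      ultimately have "x \<in> G i" unfolding G_def using eta_pos[of x] by simp
      then show ?thesis using \<open>i\<in>\<U>\<close> by blast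
    qed
    then show ?thesis by auto
  qed
  have G_ord: "card {i\<in>\<U>. x \<in> G i} \<le> k" for x
  proof (rule ccontr)
    assume "\<not> ?thesis"
    then have "Suc k \<le> card {i\<in>\<U>. x \<in> G i}" by simp
    then obtain S where S: "S \<subseteq> {i\<in>\<U>. x \<in> G i}" "card S = Suc k" "finite S"
      by (rule obtain_subset_with_card_n)
    have SS: "S \<in> \<S>" using S unfolding \<S>_def by auto
    have Sne: "S \<noteq> {}" using S by auto
    have "(\<Sum>i\<in>S. real (Suc k) * d i x) < (\<Sum>i\<in>S. \<eta> x)"
      using S(1) Sne S(3) unfolding G_def by (intro sum_strict_mono) auto
    also have "\<dots> = real (Suc k) * \<eta> x" using S by simp
    also have "\<dots> \<le> real (Suc k) * g S x" using eta_le[OF SS] by (intro mult_left_mono) auto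
    also have "\<dots> = (\<Sum>i\<in>S. real (Suc k) * d i x)" unfolding g_def by (simp add: sum_distrib_left)
    finally show False by simp
  qed
  show "\<exists>\<V>. finite \<V> \<and> (\<forall>V\<in>\<V>. openin euclidean V) \<and> \<Union>\<V> = topspace euclidean \<and>
         (\<forall>V\<in>\<V>. \<exists>U\<in>\<U>. V \<subseteq> U) \<and>
         (\<forall>x\<in>topspace euclidean. int (card {V\<in>\<V>. x \<in> V}) \<le> int k - 1 + 1)"
  proof (intro exI[of _ "G ` \<U>"] conjI ballI)
    show "finite (G ` \<U>)" using fin by simp
    show "openin euclidean V" if "V \<in> G ` \<U>" for V using that G_open by auto
    show "\<Union> (G ` \<U>) = topspace euclidean" using G_cov by simp
    show "\<exists>U\<in>\<U>. V \<subseteq> U" if "V \<in> G ` \<U>" for V using that unfolding G_def by auto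
    fix x :: 'a
    have "{V\<in>G ` \<U>. x \<in> V} = G ` {i\<in>\<U>. x \<in> G i}" by auto
    then have "card {V\<in>G ` \<U>. x \<in> V} \<le> card {i\<in>\<U>. x \<in> G i}"
      using fin by (simp add: card_image_le)
    then show "int (card {V\<in>G ` \<U>. x \<in> V}) \<le> int k - 1 + 1" using G_ord[of x] by simp
  qed
qed


lemma bounded_diam_le:
  fixes S :: "'a::metric_space set"
  assumes pw: "\<And>x y. x\<in>S \<Longrightarrow> y\<in>S \<Longrightarrow> dist x y \<le> d" and d: "0 \<le> d"
  shows "bounded S \<and> diameter S \<le> d"
proof (cases "S = {}")
  case True then show ?thesis using d by simp
next
  case False
  then obtain x0 where x0: "x0 \<in> S" by blast
  have "bounded S" unfolding bounded_def
    by (intro exI[of _ x0] exI[of _ d] ballI pw x0)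
  moreover have "diameter S \<le> d"
  proof -
    have "(SUP (x,y)\<in>S\<times>S. dist x y) \<le> d"
    proof (rule cSUP_least)
      show "S \<times> S \<noteq> {}" using False by simp
      fix xy assume "xy \<in> S \<times> S"
      then show "(case xy of (x, y) \<Rightarrow> dist x y) \<le> d" using pw by (cases xy) simp
    qed
    then show ?thesis unfolding diameter_def using False by simp
  qed
  ultimately show ?thesis by simp
qed

lemma supply_core:
  fixes \<phi> :: "'a::metric_space \<Rightarrow> 'a" and f :: "'a \<Rightarrow> 'b::metric_space" and a0 :: 'a
  assumes bij: "bij \<phi>" and c: "0 < c" "c < 1" and phid: "\<And>x y. dist (\<phi> x) (\<phi> y) = c * dist x y"
    and L: "L \<ge> 1" and C: "C \<ge> 0"
    and qi: "\<And>x y. dist x y / L - C \<le> dist (f x) (f y) \<and> dist (f x) (f y) \<le> L * dist x y + C"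
    and hyp: "\<forall>R>0. \<exists>\<U>::'b set set. \<Union>\<U> = UNIV \<and> radially_sublinear \<U> \<and> R_multiplicity_le R \<U> k"
  shows "cov_supply a0 k"
proof -
  have Pd: "dist ((\<phi>^^n) x) ((\<phi>^^n) y) = c^n * dist x y" for n x y
    by (induction n) (auto simp: phid)
  have Pbij: "bij (\<phi>^^n)" for n using bij by simp
  define d0 where "d0 = dist a0 (\<phi> a0)"
  define B where "B = d0 / (1 - c)"
  have B0: "B \<ge> 0" unfolding B_def d0_def using c by auto
  have BB: "d0 + c * B = B" unfolding B_def using c by (simp add: field_simps)
  have PB: "dist a0 ((\<phi>^^n) a0) \<le> B" for n
  proof (induction n)
    case 0 then show ?case using B0 by simp
  next
    case (Suc n)
    have "dist a0 ((\<phi>^^Suc n) a0) \<le> dist a0 (\<phi> a0) + dist (\<phi> a0) (\<phi> ((\<phi>^^n) a0))"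
      by (simp add: dist_triangle)
    also have "\<dots> = d0 + c * dist a0 ((\<phi>^^n) a0)" by (simp add: d0_def phid)
    also have "\<dots> \<le> d0 + c * B" using Suc c by (intro add_left_mono mult_left_mono) auto
    finally show ?case using BB by simp
  qed
  define R where "R = L + C"
  have R0: "R > 0" unfolding R_def using L C by auto
  have "\<exists>\<U>::'b set set. \<Union>\<U> = UNIV \<and> radially_sublinear \<U> \<and> R_multiplicity_le R \<U> k"
    by (rule hyp[rule_format, OF R0])
  then obtain \<U> :: "'b set set" where U3: "\<Union>\<U> = UNIV \<and> radially_sublinear \<U> \<and> R_multiplicity_le R \<U> k"
    by (rule exE)
  then have Ucov: "\<Union>\<U> = UNIV" and Usub: "radially_sublinear \<U>"
    and Umult: "R_multiplicity_le R \<U> k" by simp_all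
  obtain b0 where sub: "\<forall>\<epsilon>>0. \<exists>M. \<forall>m\<ge>M. \<forall>U\<in>\<U>. infdist b0 U \<le> m \<longrightarrow> bounded U \<and> diameter U \<le> \<epsilon> * m"
    using Usub unfolding radially_sublinear_def by (rule exE)
  have Lpos: "L > 0" using L by simp
  show ?thesis unfolding cov_supply_def
  proof (intro allI impI)
    fix \<rho> e :: real assume rho: "\<rho> \<ge> 0" and e: "e > 0"
    define \<epsilon> where "\<epsilon> = e / (2*L*L*(\<rho>+B+1))"
    have eps: "\<epsilon> > 0" unfolding \<epsilon>_def using e Lpos rho B0 by auto
    obtain M where M: "\<forall>m\<ge>M. \<forall>U\<in>\<U>. infdist b0 U \<le> m \<longrightarrow> bounded U \<and> diameter U \<le> \<epsilon> * m"
      using sub eps by blast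
    define M' where "M' = max M 0"
    define D0 where "D0 = dist b0 (f a0)"
    define Q where "Q = L * (\<epsilon>*(M' + D0 + C) + C)"
    have Q0: "Q \<ge> 0" unfolding Q_def M'_def D0_def using Lpos eps C by auto
    obtain n where n: "c^n < e / (2*(Q+1))"
      using real_arch_pow_inv[of "e / (2*(Q+1))" c] e Q0 c by auto
    define r where "r = c^n"
    have r0: "r > 0" unfolding r_def using c by simp
    have rQ: "r * Q \<le> e/2"
    proof -
      have "r * Q \<le> r * (Q+1)" using r0 by simp
      also have "\<dots> \<le> e / (2*(Q+1)) * (Q+1)" using n Q0 unfolding r_def by (intro mult_right_mono) auto
      also have "\<dots> = e/2" using Q0 by (simp add: field_simps)
      finally show ?thesis .
    qed
    define img where "img U = (\<phi>^^n) ` (f -` U)" for U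
    define \<V> where "\<V> = img ` \<U>"
    define iv where "iv x = inv (\<phi>^^n) x" for x
    have iv: "(\<phi>^^n) (iv x) = x" for x unfolding iv_def using Pbij[of n]
      by (simp add: bij_is_surj surj_f_inv_f)
    show "\<exists>r>0. \<exists>\<V>::'a set set. \<Union>\<V> = UNIV \<and>
      (\<forall>x. finite {V\<in>\<V>. V \<inter> cball x r \<noteq> {}} \<and> card {V\<in>\<V>. V \<inter> cball x r \<noteq> {}} \<le> k) \<and>
      (\<forall>V\<in>\<V>. V \<inter> cball a0 \<rho> \<noteq> {} \<longrightarrow> bounded V \<and> diameter V \<le> e)"
    proof (intro exI[of _ r] exI[of _ \<V>] conjI allI ballI impI r0)
      show "\<Union>\<V> = UNIV"
      proof (intro set_eqI iffI)
        fix x :: 'a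
        have "f (iv x) \<in> \<Union>\<U>" using Ucov by simp
        then obtain U where U: "U \<in> \<U>" "f (iv x) \<in> U" by blast
        then have "x \<in> img U" unfolding img_def using iv[of x] by (metis imageI vimageI)
        then show "x \<in> \<Union>\<V>" unfolding \<V>_def using U by blast
      qed auto
    next
      fix x :: 'a
      let ?S = "{V\<in>\<V>. V \<inter> cball x r \<noteq> {}}"
      let ?T = "{U\<in>\<U>. U \<inter> cball (f (iv x)) R \<noteq> {}}"
      have T: "finite ?T" "card ?T \<le> k" using Umult unfolding R_multiplicity_le_def by auto
      have "?S \<subseteq> img ` ?T"
      proof
        fix W assume "W \<in> ?S"
        then have "W \<in> img ` \<U>" "W \<inter> cball x r \<noteq> {}" unfolding \<V>_def by auto
        then obtain U z where U: "U\<in>\<U>" "W = img U" "z \<in> W" "dist x z \<le> r"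
          by (metis IntE all_not_in_conv imageE mem_cball)
        then obtain p where p: "z = (\<phi>^^n) p" "f p \<in> U" unfolding img_def by auto
        have "dist x z = r * dist (iv x) p" using Pd[of n "iv x" p] iv[of x] p unfolding r_def by simp
        then have "dist (iv x) p \<le> 1" using U(4) r0 by (simp add: mult_le_cancel_left1)
        then have "dist (f (iv x)) (f p) \<le> R" using qi[of "iv x" p] Lpos unfolding R_def
          by (smt (verit) mult_left_le)
        then have "U \<in> ?T" using U p by auto
        then show "W \<in> img ` ?T" using U by blast
      qed
      moreover have "finite (img ` ?T)" using T by simp
      ultimately show "finite ?S" by (rule finite_subset)
      have "card ?S \<le> card (img ` ?T)" using \<open>?S \<subseteq> img ` ?T\<close> \<open>finite (img ` ?T)\<close> by (rule card_mono[rotated])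
      also have "\<dots> \<le> card ?T" using T(1) by (rule card_image_le)
      finally show "card ?S \<le> k" using T by simp
    next
      fix W assume W: "W \<in> \<V>" "W \<inter> cball a0 \<rho> \<noteq> {}"
      note W = W
      then obtain U where U: "U\<in>\<U>" "W = img U" unfolding \<V>_def by auto
      obtain z where z: "z \<in> W" "dist a0 z \<le> \<rho>" using W by auto
      then obtain p where p: "z = (\<phi>^^n) p" "f p \<in> U" using U unfolding img_def by auto
      define T where "T = (\<rho>+B)/r"
      have "r * dist p a0 = dist z ((\<phi>^^n) a0)" using Pd[of n p a0] p unfolding r_def by simp
      also have "\<dots> \<le> dist z a0 + dist a0 ((\<phi>^^n) a0)" by (rule dist_triangle)
      also have "\<dots> \<le> \<rho> + B" using z(2) PB[of n] by (simp add: dist_commute)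
      finally have "dist p a0 \<le> T" unfolding T_def using r0 by (simp add: field_simps)
      then have T0: "T \<ge> 0" by (meson order_trans zero_le_dist)
      have "infdist b0 U \<le> dist b0 (f p)" by (rule infdist_le[OF p(2)])
      also have "\<dots> \<le> D0 + dist (f a0) (f p)" unfolding D0_def by (rule dist_triangle)
      also have "\<dots> \<le> D0 + (L * T + C)"
      proof -
        have "dist (f a0) (f p) \<le> L * dist a0 p + C" using qi by blast
        also have "\<dots> \<le> L * T + C" using \<open>dist p a0 \<le> T\<close> Lpos by (simp add: dist_commute)
        finally show ?thesis by simp
      qed
      finally have idU: "infdist b0 U \<le> M' + D0 + C + L*T" unfolding M'_def by linarith
      define m where "m = M' + D0 + C + L*T"
      have "m \<ge> M" unfolding m_def M'_def D0_def using C Lpos T0 by (smt (verit) zero_le_dist mult_nonneg_nonneg)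
      then have Ub: "bounded U" "diameter U \<le> \<epsilon> * m" using M U(1) idU unfolding m_def by auto
      have pw: "dist z1 z2 \<le> r * (L * (\<epsilon> * m + C))" if zz: "z1 \<in> W" "z2 \<in> W" for z1 z2
      proof -
        obtain p1 p2 where pp: "z1 = (\<phi>^^n) p1" "z2 = (\<phi>^^n) p2" "f p1 \<in> U" "f p2 \<in> U"
          using zz U unfolding img_def by auto
        have "dist p1 p2 / L - C \<le> dist (f p1) (f p2)" using qi by blast
        also have "\<dots> \<le> diameter U" using diameter_bounded_bound[OF Ub(1) pp(3,4)] .
        also have "\<dots> \<le> \<epsilon> * m" by (rule Ub(2))
        finally have "dist p1 p2 \<le> L * (\<epsilon> * m + C)" using Lpos by (simp add: field_simps)
        then show ?thesis using Pd[of n p1 p2] pp r0 unfolding r_def by (simp add: mult_left_mono)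
      qed
      have "r * (L * (\<epsilon> * m + C)) = r * Q + L*L*\<epsilon>*(\<rho>+B)"
        unfolding m_def Q_def T_def using r0 by (simp add: field_simps)
      also have "L*L*\<epsilon>*(\<rho>+B) \<le> e/2"
      proof -
        have pos: "\<rho>+B+1 > 0" using rho B0 by linarith
        have dd: "2*L*L*(\<rho>+B+1) > 0" using Lpos pos by simp
        have "\<epsilon> * (2*L*L*(\<rho>+B+1)) = e" unfolding \<epsilon>_def using dd Lpos pos by simp
        then have "L*L*\<epsilon>*(2*(\<rho>+B+1)) = e" by (simp add: mult_ac)
        then have h1: "L*L*\<epsilon> = e/(2*(\<rho>+B+1))" using pos by (simp add: eq_divide_eq)
        have "L*L*\<epsilon>*(\<rho>+B) = e/(2*(\<rho>+B+1)) * (\<rho>+B)" using h1 by simp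
        also have "\<dots> \<le> e/(2*(\<rho>+B+1)) * (\<rho>+B+1)" using e pos by (intro mult_left_mono) auto
        also have "\<dots> = e/2" using pos by (simp add: field_simps)
        finally show ?thesis by simp
      qed
      then have "r * Q + L*L*\<epsilon>*(\<rho>+B) \<le> e" using rQ by linarith
      finally have "r * (L * (\<epsilon> * m + C)) \<le> e" .
      moreover have "0 \<le> r * (L * (\<epsilon> * m + C))" using pw z(1) by (meson order_trans zero_le_dist)
      moreover have "bounded W \<and> diameter W \<le> r * (L * (\<epsilon> * m + C))"
        using bounded_diam_le[of W "r * (L * (\<epsilon> * m + C))"] pw calculation(2) by blast
      ultimately show "bounded W" "diameter W \<le> e" by linarith+
    qed
  qed
qed


theorem proposition3p3:
  fixes k :: nat
  assumes "proper_metric TYPE('a::metric_space)"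
    and "admits_dilations TYPE('a)"
    and "uniformly_discrete TYPE('b::metric_space)"
    and "quasi_isometric TYPE('a) TYPE('b)"
    and "\<forall>R>0. \<exists>\<U>::'b set set. \<Union>\<U> = UNIV \<and> radially_sublinear \<U> \<and> R_multiplicity_le R \<U> k"
  shows "ereal (real k) \<ge> dim_top (euclidean :: 'a topology) + 1"
proof -
  note hyp = assms(5)
  have proper: "\<And>x r. compact (cball (x::'a) r)" using assms(1) unfolding proper_metric_def by auto
  have "\<exists>(f::'a \<Rightarrow> 'b) (L::real) (C::real). L \<ge> 1 \<and> C \<ge> 0 \<and>
      (\<forall>x y. dist x y / L - C \<le> dist (f x) (f y) \<and> dist (f x) (f y) \<le> L * dist x y + C) \<and>
      (\<forall>z. \<exists>x. dist z (f x) \<le> C)" using assms(4) unfolding quasi_isometric_def .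
  then obtain f :: "'a \<Rightarrow> 'b" and L C where L: "L \<ge> 1" and C: "C \<ge> 0"
    and qi: "\<forall>x y. dist x y / L - C \<le> dist (f x) (f y) \<and> dist (f x) (f y) \<le> L * dist x y + C"
    by (elim exE conjE)
  have k1: "k \<ge> 1"
  proof -
    have "\<exists>\<U>::'b set set. \<Union>\<U> = UNIV \<and> radially_sublinear \<U> \<and> R_multiplicity_le 1 \<U> k"
      by (rule hyp[rule_format]) simp
    then obtain \<U> :: "'b set set" where U: "\<Union>\<U> = UNIV \<and> radially_sublinear \<U> \<and> R_multiplicity_le 1 \<U> k"
      by (rule exE)
    define b :: 'b where "b = undefined"
    have "b \<in> \<Union>\<U>" using U by simp
    then obtain U where "U \<in> \<U>" "b \<in> U" by blast
    then have "U \<in> {U\<in>\<U>. U \<inter> cball b 1 \<noteq> {}}" by auto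
    moreover have "finite {U\<in>\<U>. U \<inter> cball b 1 \<noteq> {}}" "card {U\<in>\<U>. U \<inter> cball b 1 \<noteq> {}} \<le> k"
      using U unfolding R_multiplicity_le_def by auto
    ultimately have "card {U\<in>\<U>. U \<inter> cball b 1 \<noteq> {}} > 0" by (simp add: card_gt_0_iff) blast
    then show ?thesis using \<open>card {U\<in>\<U>. U \<inter> cball b 1 \<noteq> {}} \<le> k\<close> by linarith
  qed
  define a0 :: 'a where "a0 = undefined"
  have sup: "cov_supply a0 k"
  proof (cases "\<forall>x y::'a. x = y")
    case True
    have UA: "(UNIV::'a set) = {a0}"
    proof (intro set_eqI iffI)
      fix x :: 'a show "x \<in> {a0}" using True by blast
    qed simp
    show ?thesis unfolding cov_supply_def
    proof (intro allI impI exI[of _ "1::real"] exI[of _ "{UNIV::'a set}"] conjI ballI)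
      fix x :: 'a
      have sub: "{V\<in>{UNIV::'a set}. V \<inter> cball x 1 \<noteq> {}} \<subseteq> {UNIV}" by auto
      then show "finite {V\<in>{UNIV::'a set}. V \<inter> cball x 1 \<noteq> {}}" by (rule finite_subset) simp
      have "card {V\<in>{UNIV::'a set}. V \<inter> cball x 1 \<noteq> {}} \<le> card {UNIV::'a set}"
        using sub by (intro card_mono) auto
      then show "card {V\<in>{UNIV::'a set}. V \<inter> cball x 1 \<noteq> {}} \<le> k" using k1 by simp
    next
      fix \<rho> e :: real and V :: "'a set" assume "0 < e" "V \<in> {UNIV}"
      then have Va: "V = {a0}" using UA by simp
      show "bounded V" unfolding Va by simp
      show "diameter V \<le> e" unfolding Va using \<open>0 < e\<close> by simp
    qed auto
  next
    case False
    then obtain x1 y1 :: 'a where xy: "x1 \<noteq> y1" by blast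
    obtain lam :: real and \<psi> :: "'a \<Rightarrow> 'a" where lam: "lam \<noteq> 1" and bij: "bij \<psi>"
      and psid: "\<forall>x x'. dist (\<psi> x) (\<psi> x') = lam * dist x x'"
      using assms(2) unfolding admits_dilations_def by (elim exE conjE)
    have dpos: "dist x1 y1 > 0" using xy by simp
    have "lam * dist x1 y1 \<ge> 0" using psid by (metis zero_le_dist)
    then have "lam \<ge> 0" using dpos by (simp add: zero_le_mult_iff)
    moreover have "lam \<noteq> 0"
    proof
      assume "lam = 0"
      then have "\<psi> x1 = \<psi> y1" using psid by simp
      then show False using xy bij by (simp add: bij_is_inj inj_eq)
    qed
    ultimately have lpos: "lam > 0" by simp
    have qi': "\<And>x y. dist x y / L - C \<le> dist (f x) (f y) \<and> dist (f x) (f y) \<le> L * dist x y + C"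
      using qi by blast
    show ?thesis
    proof (cases "lam < 1")
      case True
      show ?thesis
        by (rule supply_core[OF bij lpos True _ L C qi' hyp]) (use psid in blast)
    next
      case False
      then have l1: "lam > 1" using lam by simp
      have ib: "bij (inv \<psi>)" using bij by (rule bij_imp_bij_inv)
      have "dist (inv \<psi> x) (inv \<psi> y) = (1/lam) * dist x y" for x y
      proof -
        have "dist x y = dist (\<psi> (inv \<psi> x)) (\<psi> (inv \<psi> y))"
          using bij by (simp add: bij_is_surj surj_f_inv_f)
        also have "\<dots> = lam * dist (inv \<psi> x) (inv \<psi> y)" using psid by blast
        finally show ?thesis using lpos by simp
      qed
      then show ?thesis
        using supply_core[OF ib _ _ _ L C qi' hyp, of "1/lam"] lpos l1 by auto
    qed
  qed
  have cd: "covering_dim_le (euclidean::'a topology) (int k - 1)"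
    by (rule dim_lemma[OF proper sup])
  then have "dim_top (euclidean::'a topology) \<le> ereal (of_int (int k - 1))"
    unfolding dim_top_def by (intro Inf_lower) blast
  then have "dim_top (euclidean::'a topology) + 1 \<le> ereal (of_int (int k - 1)) + 1"
    by (rule add_right_mono)
  also have "\<dots> = ereal (real k)" by simp
  finally show ?thesis .
qed

end
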